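(* If $C$ is a projective linear code of length $n$ over $\mathbb{Z}_4$ of type $4^{k_1}2^{k_2}$, then $n\le 2^{2k_1+k_2-1}-2^{k_1+k_2-1}$.
   Context: A linear code of length $n$ over $\mathbb{Z}_4$ is a $\mathbb{Z}_4$-submodule of $\mathbb{Z}_4^n$, of type $4^{k_1}2^{k_2}$ if isomorphic to $\mathbb{Z}_4^{k_1}\times\mathbb{Z}_2^{k_2}$. Lee weight: $w_L(0)=0,w_L(1)=1,w_L(2)=2,w_L(3)=1$, additive on vectors. $C$ is projective if its dual $C^\perp=\{\mathbf{x}:\sum x_iy_i=0\in\mathbb{Z}_4\ \forall\mathbf{y}\in C\}$ has minimum nonzero Lee weight at least $3$. *)

theory Defs
  imports Main "HOL-Library.Numeral_Type"
begin

text \<open>Z4 is the library type 4 (integers mod 4); Z2 is the type 2.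
  A vector of length n over Z4 is a function nat => 4 vanishing outside {0..<n}.\<close>

definition vecs4 :: "nat \<Rightarrow> (nat \<Rightarrow> 4) set" where
  "vecs4 n = {x. \<forall>i\<ge>n. x i = 0}"

definition z4_linear_code :: "nat \<Rightarrow> (nat \<Rightarrow> 4) set \<Rightarrow> bool" where
  "z4_linear_code n C \<longleftrightarrow> C \<subseteq> vecs4 n \<and> (\<lambda>i. 0) \<in> C \<and>
     (\<forall>x\<in>C. \<forall>y\<in>C. (\<lambda>i. x i + y i) \<in> C) \<and>
     (\<forall>c::4. \<forall>x\<in>C. (\<lambda>i. c * x i) \<in> C)"

definition z4z2_group :: "nat \<Rightarrow> nat \<Rightarrow> ((nat \<Rightarrow> 4) \<times> (nat \<Rightarrow> 2)) set" where
  "z4z2_group k1 k2 = {(a, b). (\<forall>i\<ge>k1. a i = 0) \<and> (\<forall>i\<ge>k2. b i = 0)}"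

definition code_type :: "(nat \<Rightarrow> 4) set \<Rightarrow> nat \<Rightarrow> nat \<Rightarrow> bool" where
  "code_type C k1 k2 \<longleftrightarrow> (\<exists>f. bij_betw f C (z4z2_group k1 k2) \<and>
     (\<forall>x\<in>C. \<forall>y\<in>C. f (\<lambda>i. x i + y i) =
        ((\<lambda>i. fst (f x) i + fst (f y) i), (\<lambda>i. snd (f x) i + snd (f y) i))))"

definition lee_weight4 :: "4 \<Rightarrow> nat" where
  "lee_weight4 a = (if a = 0 then 0 else if a = 2 then 2 else 1)"

definition lee_weight :: "nat \<Rightarrow> (nat \<Rightarrow> 4) \<Rightarrow> nat" where
  "lee_weight n x = (\<Sum>i<n. lee_weight4 (x i))"

definition dual_code :: "nat \<Rightarrow> (nat \<Rightarrow> 4) set \<Rightarrow> (nat \<Rightarrow> 4) set" where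
  "dual_code n C = {x \<in> vecs4 n. \<forall>y\<in>C. (\<Sum>i<n. x i * y i) = 0}"

definition projective_code :: "nat \<Rightarrow> (nat \<Rightarrow> 4) set \<Rightarrow> bool" where
  "projective_code n C \<longleftrightarrow> (\<forall>x\<in>dual_code n C. x \<noteq> (\<lambda>i. 0) \<longrightarrow> lee_weight n x \<ge> 3)"

end

theory Submission
  imports Defs "HOL-Library.FuncSet"
begin

definition pad :: "(nat\<Rightarrow>4)\<times>(nat\<Rightarrow>2) \<Rightarrow> (nat\<Rightarrow>4)\<times>(nat\<Rightarrow>2) \<Rightarrow> (nat\<Rightarrow>4)\<times>(nat\<Rightarrow>2)" where
  "pad p q = (\<lambda>i. fst p i + fst q i, \<lambda>i. snd p i + snd q i)"

lemma ex4: "(x::4) = 0 \<or> x = 1 \<or> x = 2 \<or> x = 3"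
proof -
  have "{0,1,2,3::4} = UNIV" by (rule card_subset_eq) (auto simp: card_insert_if)
  then show ?thesis by auto
qed

lemma ex2: "(x::2) = 0 \<or> x = 1"
proof -
  have "{0,1::2} = UNIV" by (rule card_subset_eq) (auto simp: card_insert_if)
  then show ?thesis by auto
qed

lemma gen:
  fixes Q :: "(nat\<Rightarrow>4)\<times>(nat\<Rightarrow>2) \<Rightarrow> bool"
  assumes add: "\<And>p q. Q p \<Longrightarrow> Q q \<Longrightarrow> Q (pad p q)"
    and z: "Q (\<lambda>i. 0, \<lambda>i. 0)"
    and e1: "\<And>l. l < k1 \<Longrightarrow> Q (\<lambda>i. if i = l then 1 else 0, \<lambda>i. 0)"
    and e2: "\<And>l. l < k2 \<Longrightarrow> Q (\<lambda>i. 0, \<lambda>i. if i = l then 1 else 0)"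
    and p: "p \<in> z4z2_group k1 k2"
  shows "Q p"
proof -
  have s1: "Q (\<lambda>i. if i = l then c else 0, \<lambda>i. 0)" if "l < k1" for l c
  proof -
    let ?E = "\<lambda>c::4. ((\<lambda>i. if i = l then c else 0), (\<lambda>i. 0::2))"
    have Q1: "Q (?E 1)" using e1[OF that] .
    have Q2: "Q (?E 2)"
    proof -
      have "?E 2 = pad (?E 1) (?E 1)" by (auto simp: pad_def)
      then show ?thesis using add[OF Q1 Q1] by simp
    qed
    have Q3: "Q (?E 3)"
    proof -
      have "?E 3 = pad (?E 2) (?E 1)" by (auto simp: pad_def)
      then show ?thesis using add[OF Q2 Q1] by simp
    qed
    have Q0: "Q (?E 0)" using z by (simp add: if_distrib cong: if_cong)
    show ?thesis using ex4[of c] Q0 Q1 Q2 Q3 by auto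
  qed
  have s2: "Q (\<lambda>i. 0, \<lambda>i. if i = l then c else 0)" if "l < k2" for l c
  proof -
    have Q0: "Q (\<lambda>i. 0, \<lambda>i. if i = l then (0::2) else 0)" using z by simp
    show ?thesis using ex2[of c] Q0 e2[OF that] by auto
  qed
  have ph1: "Q (a, \<lambda>i. 0)" if "\<forall>i\<ge>m. a i = 0" "m \<le> k1" for a m
    using that
  proof (induction m arbitrary: a)
    case 0
    then have "a = (\<lambda>i. 0)" by auto
    then show ?case using z by simp
  next
    case (Suc m)
    have h: "Q (a(m := 0), \<lambda>i. 0)" using Suc by auto
    have "(a, \<lambda>i. 0) = pad (a(m := 0), \<lambda>i. 0) (\<lambda>i. if i = m then a m else 0, \<lambda>i. 0)"
      by (auto simp: pad_def)
    then show ?case using add[OF h s1[of m "a m"]] Suc by simp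
  qed
  have ph2: "Q (a, b)" if "\<forall>i\<ge>k1. a i = 0" "\<forall>i\<ge>m. b i = 0" "m \<le> k2" for a b m
    using that(2,3)
  proof (induction m arbitrary: b)
    case 0
    then have "b = (\<lambda>i. 0)" by auto
    then show ?case using ph1[OF that(1)] by simp
  next
    case (Suc m)
    have h: "Q (a, b(m := 0))" using Suc by auto
    have "(a, b) = pad (a, b(m := 0)) (\<lambda>i. 0, \<lambda>i. if i = m then b m else 0)"
      by (auto simp: pad_def)
    then show ?case using add[OF h s2[of m "b m"]] Suc by simp
  qed
  obtain a b where "p = (a, b)" by force
  then show ?thesis using p ph2[where a=a and b=b and m=k2] by (auto simp: z4z2_group_def)
qed

lemma card_supp:
  fixes B :: "'a::zero set"
  assumes "finite B"
  shows "card {b::nat\<Rightarrow>'a. (\<forall>j\<ge>k. b j = 0) \<and> (\<forall>j<k. b j \<in> B)} = card B ^ k"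
proof -
  let ?S = "{b::nat\<Rightarrow>'a. (\<forall>j\<ge>k. b j = 0) \<and> (\<forall>j<k. b j \<in> B)}"
  have "bij_betw (\<lambda>b. restrict b {..<k}) ?S (PiE {..<k} (\<lambda>_. B))"
  proof (rule bij_betwI[where g="\<lambda>p j. if j < k then p j else 0"])
    show "(\<lambda>b. restrict b {..<k}) \<in> ?S \<rightarrow> PiE {..<k} (\<lambda>_. B)"
      by (rule funcsetI) (simp add: PiE_iff)
    show "(\<lambda>p j. if j < k then p j else 0) \<in> PiE {..<k} (\<lambda>_. B) \<rightarrow> ?S"
      by (rule funcsetI) (simp add: PiE_iff)
    show "\<And>x. x \<in> ?S \<Longrightarrow> (\<lambda>j. if j < k then restrict x {..<k} j else 0) = x"
      by (rule ext) (simp add: not_less)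
    show "\<And>y. y \<in> PiE {..<k} (\<lambda>_. B) \<Longrightarrow> restrict (\<lambda>j. if j < k then y j else 0) {..<k} = y"
      by (rule ext) (simp add: PiE_iff extensional_def)
  qed
  then have "card ?S = card (PiE {..<k} (\<lambda>_. B))" by (rule bij_betw_same_card)
  also have "\<dots> = card B ^ k" by (simp add: card_PiE)
  finally show ?thesis .
qed

lemma arith:
  fixes n k1 k2 :: nat
  assumes "2 * n \<le> (4 ^ k1 - 2 ^ k1) * 2 ^ k2"
  shows "n \<le> 2 ^ (2 * k1 + k2 - 1) - 2 ^ (k1 + k2 - 1)"
proof (cases k1)
  case 0 then show ?thesis using assms by simp
next
  case (Suc m)
  define a :: nat where "a = 2^m"
  define b :: nat where "b = 2^k2"
  have a1: "a \<ge> 1" "b \<ge> 1" unfolding a_def b_def by simp_all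
  have e1: "(4::nat) ^ k1 = 4 * a * a" unfolding Suc a_def
    by (simp add: power_mult_distrib[symmetric])
  have e2: "(2::nat) ^ k1 = 2 * a" unfolding Suc a_def by simp
  have e3: "(2::nat) ^ (2 * k1 + k2 - 1) = 2 * a * a * b" unfolding Suc a_def b_def
    by (simp add: power_add power_mult power_mult_distrib[symmetric])
  have e4: "(2::nat) ^ (k1 + k2 - 1) = a * b" unfolding Suc a_def b_def
    by (simp add: power_add)
  have "2 * n \<le> (4 * a * a - 2 * a) * b" using assms e1 e2 b_def by simp
  moreover have "a * b \<le> 2 * a * a * b" using a1 by simp
  moreover have "(4 * a * a - 2 * a) * b = 2 * (2 * a * a * b - a * b)"
    by (simp add: diff_mult_distrib diff_mult_distrib2 algebra_simps)
  ultimately show ?thesis unfolding e3 e4 by linarith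
qed


lemma no_small:
  assumes "projective_code n C" "x \<in> vecs4 n" "x \<noteq> (\<lambda>i. 0)" "lee_weight n x < 3"
    "\<forall>y\<in>C. (\<Sum>l<n. x l * y l) = 0"
  shows False
  using assms unfolding projective_code_def dual_code_def by force

lemma no_pair:
  assumes proj: "projective_code n C" and ij: "i < n" "j < n" "i \<noteq> j" and u: "u = 1 \<or> u = (3::4)"
    and h: "\<forall>y\<in>C. y i + u * y j = 0"
  shows False
proof -
  define x where "x = (\<lambda>l. if l = i then 1 else if l = j then u else (0::4))"
  have xv: "x \<in> vecs4 n" using ij by (auto simp: x_def vecs4_def)
  have xn: "x \<noteq> (\<lambda>i. 0)" by (metis x_def zero_neq_one)
  have "lee_weight4 (x l) = (if l = i then 1 else 0) + (if l = j then 1 else 0)" for l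
    using ij u by (auto simp: x_def lee_weight4_def)
  then have "lee_weight n x = (\<Sum>l<n. (if l = i then 1 else 0) + (if l = j then 1 else 0))"
    unfolding lee_weight_def by simp
  also have "\<dots> = 2" using ij by (simp add: sum.distrib)
  finally have w: "lee_weight n x < 3" by simp
  have "(\<Sum>l<n. x l * y l) = 0" if "y \<in> C" for y
  proof -
    have "x l * y l = (if l = i then y i else 0) + (if l = j then u * y j else 0)" for l
      using ij by (auto simp: x_def)
    then have "(\<Sum>l<n. x l * y l) = (\<Sum>l<n. (if l = i then y i else 0) + (if l = j then u * y j else 0))"
      by simp
    also have "\<dots> = y i + u * y j" using ij by (simp add: sum.distrib)
    finally show ?thesis using h that by simp
  qed
  then show False using no_small[OF proj xv xn w] by blast
qed

lemma no_single:
  assumes proj: "projective_code n C" and i: "i < n"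
    and h: "\<forall>y\<in>C. 2 * y i = 0"
  shows False
proof -
  define x where "x = (\<lambda>l. if l = i then 2 else (0::4))"
  have xv: "x \<in> vecs4 n" using i by (auto simp: x_def vecs4_def)
  have xn: "x \<noteq> (\<lambda>i. 0)"
  proof
    assume "x = (\<lambda>i. 0)"
    then have "x i = 0" by simp
    then show False by (simp add: x_def)
  qed
  have "lee_weight4 (x l) = (if l = i then 2 else 0)" for l
    by (auto simp: x_def lee_weight4_def)
  then have "lee_weight n x = (\<Sum>l<n. (if l = i then 2 else 0))"
    unfolding lee_weight_def by simp
  also have "\<dots> = 2" using i by simp
  finally have w: "lee_weight n x < 3" by simp
  have "(\<Sum>l<n. x l * y l) = 0" if "y \<in> C" for y
  proof -
    have "x l * y l = (if l = i then 2 * y i else 0)" for l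
      by (auto simp: x_def)
    then have "(\<Sum>l<n. x l * y l) = (\<Sum>l<n. (if l = i then 2 * y i else 0))"
      by simp
    also have "\<dots> = 2 * y i" using i by simp
    finally show ?thesis using h that by simp
  qed
  then show False using no_small[OF proj xv xn w] by blast
qed

theorem proposition4p2:
  fixes n k1 k2 :: nat and C :: "(nat \<Rightarrow> 4) set"
  assumes "z4_linear_code n C"
    and "code_type C k1 k2"
    and "projective_code n C"
  shows "n \<le> 2 ^ (2 * k1 + k2 - 1) - 2 ^ (k1 + k2 - 1)"
proof -
  note lin = assms(1)[unfolded z4_linear_code_def]
  note proj = assms(3)
  let ?G = "z4z2_group k1 k2"
  obtain f where bij: "bij_betw f C ?G" and hom: "\<forall>x\<in>C. \<forall>y\<in>C. f (\<lambda>i. x i + y i) = pad (f x) (f y)"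
    using assms(2) unfolding code_type_def pad_def by blast
  define g where "g = inv_into C f"
  have gC: "g p \<in> C" if "p \<in> ?G" for p
    using bij that unfolding g_def by (metis bij_betw_def inv_into_into)
  have fg: "f (g p) = p" if "p \<in> ?G" for p
    using bij that unfolding g_def by (metis bij_betw_def f_inv_into_f)
  have gf: "g (f c) = c" if "c \<in> C" for c
    using bij that unfolding g_def by (metis bij_betw_def inv_into_f_f)
  have fC: "f c \<in> ?G" if "c \<in> C" for c
    using bij that by (metis bij_betw_def imageI)
  have Gadd: "pad p q \<in> ?G" if "p \<in> ?G" "q \<in> ?G" for p q
    using that by (auto simp: z4z2_group_def pad_def)
  have gadd: "g (pad p q) = (\<lambda>i. g p i + g q i)" if "p \<in> ?G" "q \<in> ?G" for p q
  proof -
    have s: "(\<lambda>i. g p i + g q i) \<in> C" using lin gC that by blast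
    have "f (\<lambda>i. g p i + g q i) = pad p q" using hom gC fg that by simp
    then show ?thesis using gf[OF s] by simp
  qed
  have z: "(\<lambda>i. 0, \<lambda>i. 0) \<in> ?G" by (simp add: z4z2_group_def)
  have g0: "g (\<lambda>i. 0, \<lambda>i. 0) = (\<lambda>i. 0)"
  proof -
    have "pad (\<lambda>i. 0, \<lambda>i. 0) (\<lambda>i. 0, \<lambda>i. 0) = (\<lambda>i. 0, \<lambda>i. 0)" by (simp add: pad_def)
    then have h: "g (\<lambda>i. 0, \<lambda>i. 0) = (\<lambda>i. g (\<lambda>i. 0, \<lambda>i. 0) i + g (\<lambda>i. 0, \<lambda>i. 0) i)"
      using gadd[OF z z] by simp
    have "g (\<lambda>i. 0, \<lambda>i. 0) i = 0" for i using fun_cong[OF h, of i] by simp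
    then show ?thesis by (simp add: fun_eq_iff)
  qed
  define E1 :: "nat \<Rightarrow> (nat\<Rightarrow>4)\<times>(nat\<Rightarrow>2)" where "E1 l = ((\<lambda>i. if i = l then 1 else 0), (\<lambda>i. 0))" for l
  define E2 :: "nat \<Rightarrow> (nat\<Rightarrow>4)\<times>(nat\<Rightarrow>2)" where "E2 l = ((\<lambda>i. 0), (\<lambda>i. if i = l then 1 else 0))" for l
  have E1G: "E1 l \<in> ?G" if "l < k1" for l using that by (auto simp: E1_def z4z2_group_def)
  have E2G: "E2 l \<in> ?G" if "l < k2" for l using that by (auto simp: E2_def z4z2_group_def)
  have twoE2: "g (E2 l) i + g (E2 l) i = 0" if "l < k2" for l i
  proof -
    have "pad (E2 l) (E2 l) = (\<lambda>i. 0, \<lambda>i. 0)" by (auto simp: pad_def E2_def)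
    then have "g (pad (E2 l) (E2 l)) = (\<lambda>i. 0)" using g0 by simp
    then show ?thesis using gadd[OF E2G[OF that] E2G[OF that]] fun_cong by metis
  qed
  have key: "L c = 0"
    if Ladd: "\<And>x y. L (\<lambda>i. x i + y i) = L x + L y"
      and L1: "\<forall>l<k1. L (g (E1 l)) = 0" and L2: "\<forall>l<k2. L (g (E2 l)) = 0" and c: "c \<in> C"
    for L :: "(nat \<Rightarrow> 4) \<Rightarrow> 4" and c
  proof -
    have L0: "L (\<lambda>i. 0) = 0"
      using Ladd[of "\<lambda>i. 0" "\<lambda>i. 0"] by simp
    have "f c \<in> ?G \<and> L (g (f c)) = 0"
    proof (rule gen[where Q="\<lambda>p. p \<in> ?G \<and> L (g p) = 0"])
      show "\<And>p q. p \<in> ?G \<and> L (g p) = 0 \<Longrightarrow> q \<in> ?G \<and> L (g q) = 0 \<Longrightarrow>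
          pad p q \<in> ?G \<and> L (g (pad p q)) = 0"
        using Gadd gadd Ladd by simp
      show "(\<lambda>i. 0, \<lambda>i. 0) \<in> ?G \<and> L (g (\<lambda>i. 0, \<lambda>i. 0)) = 0" using z g0 L0 by simp
      show "\<And>l. l < k1 \<Longrightarrow> (\<lambda>i. if i = l then 1 else 0, \<lambda>i. 0) \<in> ?G \<and>
          L (g (\<lambda>i. if i = l then 1 else 0, \<lambda>i. 0)) = 0"
        using E1G L1 unfolding E1_def by simp
      show "\<And>l. l < k2 \<Longrightarrow> (\<lambda>i. 0, \<lambda>i. if i = l then 1 else 0) \<in> ?G \<and>
          L (g (\<lambda>i. 0, \<lambda>i. if i = l then 1 else 0)) = 0"
        using E2G L2 unfolding E2_def by simp
      show "f c \<in> ?G" using fC c .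
    qed
    then show ?thesis using gf c by simp
  qed
  define K where "K i = ((\<lambda>l. if l < k1 then g (E1 l) i else 0), (\<lambda>l. if l < k2 then g (E2 l) i else 0))" for i
  define A where "A = {a::nat\<Rightarrow>4. (\<forall>j\<ge>k1. a j = 0) \<and> (\<forall>j<k1. a j \<in> UNIV)}"
  define Ae where "Ae = {a::nat\<Rightarrow>4. (\<forall>j\<ge>k1. a j = 0) \<and> (\<forall>j<k1. a j \<in> {0,2})}"
  define S2 where "S2 = {b::nat\<Rightarrow>4. (\<forall>j\<ge>k2. b j = 0) \<and> (\<forall>j<k2. b j \<in> {0,2})}"
  define S where "S = (A - Ae) \<times> S2"
  have cA: "card A = 4 ^ k1" unfolding A_def by (subst card_supp) simp_all
  have cAe: "card Ae = 2 ^ k1" unfolding Ae_def by (subst card_supp) (simp_all add: numeral_2_eq_2)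
  have cS2: "card S2 = 2 ^ k2" unfolding S2_def by (subst card_supp) (simp_all add: numeral_2_eq_2)
  have fA: "finite A" using cA by (metis card.infinite power_not_zero zero_neq_numeral)
  have fS2: "finite S2" using cS2 by (metis card.infinite power_not_zero zero_neq_numeral)
  have AeA: "Ae \<subseteq> A" by (auto simp: A_def Ae_def)
  have cS: "card S = (4 ^ k1 - 2 ^ k1) * 2 ^ k2"
    unfolding S_def card_cartesian_product using cA cAe cS2 AeA fA
    by (simp add: card_Diff_subset finite_subset)
  have fS: "finite S" unfolding S_def using fA fS2 by simp
  have KS: "K i \<in> S" if i: "i < n" for i
  proof -
    have "fst (K i) \<notin> Ae"
    proof
      assume "fst (K i) \<in> Ae"
      then have h: "\<forall>l<k1. g (E1 l) i \<in> {0,2}" by (auto simp: Ae_def K_def)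
      have "\<forall>y\<in>C. 2 * y i = 0"
      proof
        fix y assume "y \<in> C"
        show "2 * y i = 0"
        proof (rule key[where L="\<lambda>x. 2 * x i"])
          show "\<And>x y. (2::4) * (x i + y i) = 2 * x i + 2 * y i" by (simp add: distrib_left)
          show "\<forall>l<k1. (2::4) * g (E1 l) i = 0" using h by auto
          show "\<forall>l<k2. (2::4) * g (E2 l) i = 0"
          proof (intro allI impI)
            fix l assume "l < k2"
            from twoE2[OF this, of i] show "(2::4) * g (E2 l) i = 0" by (simp only: mult_2)
          qed
          show "y \<in> C" by fact
        qed
      qed
      then show False using no_single[OF proj i] by blast
    qed
    moreover have "fst (K i) \<in> A" by (auto simp: A_def K_def)
    moreover have "snd (K i) \<in> S2"
    proof -
      have "g (E2 l) i \<in> {0,2}" if "l < k2" for l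
        using twoE2[OF that, of i] ex4[of "g (E2 l) i"] by auto
      then show ?thesis by (auto simp: S2_def K_def)
    qed
    ultimately show ?thesis unfolding S_def by (metis DiffI mem_Times_iff)
  qed
  have sep: "i = j" if ij: "i < n" "j < n" and s: "s = 1 \<or> s = (-1::4)"
    and eq: "K i = ((\<lambda>l. s * fst (K j) l), (\<lambda>l. s * snd (K j) l))" for i j s
  proof (rule ccontr)
    assume ne: "i \<noteq> j"
    have "\<forall>y\<in>C. y i - s * y j = 0"
    proof
      fix y assume "y \<in> C"
      show "y i - s * y j = 0"
      proof (rule key[where L="\<lambda>x. x i - s * x j"])
        show "\<And>x y. x i + y i - s * (x j + y j) = x i - s * x j + (y i - s * y j)"
          by (simp add: algebra_simps)
        show "\<forall>l<k1. g (E1 l) i - s * g (E1 l) j = 0"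
        proof (intro allI impI)
          fix l assume "l < k1"
          then show "g (E1 l) i - s * g (E1 l) j = 0"
            using fun_cong[OF arg_cong[where f=fst, OF eq], of l] by (simp add: K_def)
        qed
        show "\<forall>l<k2. g (E2 l) i - s * g (E2 l) j = 0"
        proof (intro allI impI)
          fix l assume "l < k2"
          then show "g (E2 l) i - s * g (E2 l) j = 0"
            using fun_cong[OF arg_cong[where f=snd, OF eq], of l] by (simp add: K_def)
        qed
        show "y \<in> C" by fact
      qed
    qed
    moreover have "- s = 1 \<or> - s = 3" using s by auto
    ultimately show False using no_pair[OF proj ij ne, of "- s"] by (simp add: algebra_simps)
  qed
  define neg where "neg p = ((\<lambda>l. - fst p l), (\<lambda>l. - snd p l))" for p :: "(nat\<Rightarrow>4)\<times>(nat\<Rightarrow>4)"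
  define T where "T = K ` {..<n}"
  have injK: "inj_on K {..<n}"
    by (rule inj_onI) (use sep[where s=1] in auto)
  have cT: "card T = n" unfolding T_def using injK by (simp add: card_image)
  have injneg: "inj neg" by (rule injI) (auto simp: neg_def prod_eq_iff fun_eq_iff)
  have cnT: "card (neg ` T) = n" using cT injneg by (simp add: card_image inj_on_subset)
  have TS: "T \<subseteq> S" using KS T_def by auto
  have negS: "neg p \<in> S" if "p \<in> S" for p
  proof -
    have m: "- x \<in> {0, 2::4} \<longleftrightarrow> x \<in> {0,2}" for x :: 4
      using ex4[of x] by auto
    show ?thesis using that
      by (auto simp: S_def A_def Ae_def S2_def neg_def m simp del: insert_iff)
  qed
  have nTS: "neg ` T \<subseteq> S" using TS negS by auto
  have disj: "T \<inter> neg ` T = {}"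
  proof (rule ccontr)
    assume "T \<inter> neg ` T \<noteq> {}"
    then obtain i j where ij: "i < n" "j < n" and eq: "K i = neg (K j)" unfolding T_def by auto metis
    then have "i = j" using sep[of i j "-1"] by (simp add: neg_def)
    then have "\<forall>l<k1. g (E1 l) i \<in> {0,2}"
    proof (intro allI impI)
      fix l assume "l < k1"
      then have "g (E1 l) i = - g (E1 l) i"
        using fun_cong[OF arg_cong[where f=fst, OF eq], of l] \<open>i = j\<close> by (simp add: K_def neg_def)
      then show "g (E1 l) i \<in> {0,2}" using ex4[of "g (E1 l) i"] by auto
    qed
    then have "fst (K i) \<in> Ae" unfolding Ae_def K_def by simp
    then show False using KS[OF ij(1)] by (auto simp: S_def)
  qed
  have fT: "finite T" using fS TS finite_subset by blast
  have fnT: "finite (neg ` T)" using fT by blast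
  have "card (T \<union> neg ` T) = card T + card (neg ` T)"
    by (rule card_Un_disjoint[OF fT fnT disj])
  then have "2 * n = card (T \<union> neg ` T)" using cT cnT by simp
  also have "\<dots> \<le> card S" using TS nTS fS by (intro card_mono) auto
  also have "\<dots> = (4 ^ k1 - 2 ^ k1) * 2 ^ k2" by (rule cS)
  finally have "2 * n \<le> (4 ^ k1 - 2 ^ k1) * 2 ^ k2" .
  then show ?thesis by (rule arith)
qed

end
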